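(* Let $q$ be a prime power and $\mathcal{C}\subseteq\mathbb{F}_q^n$ a linear code of dimension $k$. Let $U\subseteq[n]$ be the set of coordinates $i$ such that some codeword of $\mathcal{C}$ is nonzero at $i$, and for $i\in U$ let $w_i = \min\{\mathrm{wt}(c) : c\in\mathcal{C},\ c_i\neq 0\}$. Then $\sum_{i\in U} \frac{1}{w_i} \le k$.
   Context: $\mathrm{wt}(c)$ is the number of nonzero coordinates of $c$. *)

theory Defs
  imports "HOL-Analysis.Analysis"
begin

definition wt :: "('a::zero) ^ 'n \<Rightarrow> nat" where
  "wt c = card {i. c $ i \<noteq> 0}"

end

theory Submission
  imports Defs
begin
definition zer :: "'n set \<Rightarrow> ('a::field)^'n \<Rightarrow> 'a^'n" where
  "zer S x = (\<chi> i. if i \<in> S then 0 else x $ i)"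

lemma zer_lin: "Vector_Spaces.linear (*s) (*s) (zer S)"
  by (unfold_locales) (auto simp: zer_def vec_eq_iff algebra_simps)

lemma dim_drop:
  fixes C :: "('a::field ^ 'n) set"
  assumes sub: "vec.subspace C" and cC: "c \<in> C" and c0: "c \<noteq> 0"
  shows "vec.dim (zer {i. c $ i \<noteq> 0} ` C) + 1 \<le> vec.dim C"
proof -
  let ?S = "{i. c $ i \<noteq> 0}"
  let ?f = "zer ?S"
  have "vec.independent {c}" using c0 by (simp add: vec.independent_insert vec.span_empty)
  then obtain B where B: "{c} \<subseteq> B" "B \<subseteq> C" "vec.independent B" "C \<subseteq> vec.span B"
    using vec.maximal_independent_subset_extend[of "{c}" C] cC by blast
  have fin: "finite B" using B(3) vec.finiteI_independent by blast
  have cardB: "card B = vec.dim C" using vec.basis_card_eq_dim[OF B(2) B(4) B(3)] .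
  have fc: "?f c = 0" by (simp add: zer_def vec_eq_iff)
  have "?f ` B = insert (?f c) (?f ` (B - {c}))" using B(1) by auto
  hence img: "?f ` B = insert 0 (?f ` (B - {c}))" using fc by simp
  have "?f ` C \<subseteq> ?f ` vec.span B" using B(4) by auto
  also have "\<dots> = vec.span (?f ` B)" using vec.linear_span_image[OF zer_lin] by metis
  also have "\<dots> = vec.span (?f ` (B - {c}))" using img vec.span_insert_0 by simp
  finally have "vec.dim (?f ` C) \<le> card (?f ` (B - {c}))"
    using vec.dim_le_card fin by blast
  also have "\<dots> \<le> card (B - {c})" using fin card_image_le by blast
  also have "\<dots> = card B - 1" using B(1) fin by simp
  finally show ?thesis using B(1) fin cardB card_0_eq by fastforce
qed

definition UU :: "('a::zero ^ 'n) set \<Rightarrow> 'n set" where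
  "UU C = {i. \<exists>c\<in>C. c $ i \<noteq> 0}"
definition WW :: "('a::zero ^ 'n) set \<Rightarrow> 'n \<Rightarrow> nat" where
  "WW C i = Min {wt c | c. c \<in> C \<and> c $ i \<noteq> 0}"

lemma WW_facts:
  fixes C :: "('a::{zero,finite} ^ 'n) set"
  assumes "x \<in> C" "x $ i \<noteq> 0"
  shows "WW C i \<le> wt x" "\<exists>y\<in>C. y $ i \<noteq> 0 \<and> wt y = WW C i"
proof -
  let ?W = "{wt c | c. c \<in> C \<and> c $ i \<noteq> 0}"
  have fin: "finite ?W" by simp
  have ne: "?W \<noteq> {}" using assms by blast
  show "WW C i \<le> wt x" unfolding WW_def using fin assms by (intro Min_le) auto
  have "Min ?W \<in> ?W" using Min_in[OF fin ne] .
  thus "\<exists>y\<in>C. y $ i \<noteq> 0 \<and> wt y = WW C i" unfolding WW_def by auto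
qed

lemma wt_pos:
  fixes x :: "'a::zero ^ 'n"
  assumes "x $ i \<noteq> 0" shows "wt x \<ge> 1"
proof -
  have "finite {i. x $ i \<noteq> 0}" by simp
  moreover have "{i. x $ i \<noteq> 0} \<noteq> {}" using assms by blast
  ultimately show ?thesis unfolding wt_def by (simp add: Suc_le_eq card_gt_0_iff)
qed

lemma main:
  fixes C :: "(('a::{field,finite}) ^ 'n) set"
  assumes "vec.subspace C"
  shows "(\<Sum>i\<in>UU C. 1 / real (WW C i)) \<le> real (vec.dim C)"
  using assms
proof (induction "vec.dim C" arbitrary: C rule: less_induct)
  case (less C)
  show ?case
  proof (cases "UU C = {}")
    case True thus ?thesis by simp
  next
    case False
    then obtain c0 where c0: "c0 \<in> C" "c0 \<noteq> 0" unfolding UU_def by (auto simp: vec_eq_iff)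
    obtain c where c: "c \<in> C \<and> c \<noteq> 0" and cmin: "\<And>y. y \<in> C \<and> y \<noteq> 0 \<Longrightarrow> wt c \<le> wt y"
      using ex_has_least_nat[of "\<lambda>x. x \<in> C \<and> x \<noteq> 0" c0 wt] c0 by blast
    define S where "S = {i. c $ i \<noteq> 0}"
    define C' where "C' = zer S ` C"
    have sub': "vec.subspace C'" unfolding C'_def using vec.linear_subspace_image[OF zer_lin less.prems] .
    have dimd: "vec.dim C' + 1 \<le> vec.dim C" unfolding C'_def S_def using dim_drop[OF less.prems] c by blast
    have IH: "(\<Sum>i\<in>UU C'. 1 / real (WW C' i)) \<le> real (vec.dim C')"
      using less.hyps[OF _ sub'] dimd by simp
    have SU: "S \<subseteq> UU C" unfolding S_def UU_def using c by auto
    have wtc: "wt c = card S" unfolding wt_def S_def ..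
    have Spos: "card S > 0"
    proof -
      obtain j where "c $ j \<noteq> 0" using c by (auto simp: vec_eq_iff)
      from wt_pos[OF this] wtc show ?thesis by simp
    qed
    have part1: "(\<Sum>i\<in>S. 1 / real (WW C i)) \<le> 1"
    proof -
      have "(\<Sum>i\<in>S. 1 / real (WW C i)) \<le> (\<Sum>i\<in>S. 1 / real (card S))"
      proof (rule sum_mono)
        fix i assume i: "i \<in> S"
        then obtain y where y: "y \<in> C" "y $ i \<noteq> 0" "wt y = WW C i"
          using WW_facts(2)[of c C i] c unfolding S_def by auto
        have "y \<noteq> 0" using y by auto
        hence "card S \<le> WW C i" using cmin y wtc by fastforce
        thus "1 / real (WW C i) \<le> 1 / real (card S)" using Spos
          by (simp add: frac_le)
      qed
      also have "\<dots> = 1" using Spos by (simp add: card_gt_0_iff)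
      finally show ?thesis .
    qed
    have part2: "(\<Sum>i\<in>UU C - S. 1 / real (WW C i)) \<le> (\<Sum>i\<in>UU C - S. 1 / real (WW C' i))"
    proof (rule sum_mono)
      fix i assume i: "i \<in> UU C - S"
      then obtain x where x: "x \<in> C" "x $ i \<noteq> 0" unfolding UU_def by auto
      then obtain y where y: "y \<in> C" "y $ i \<noteq> 0" "wt y = WW C i" using WW_facts(2) by blast
      have fy: "zer S y \<in> C'" "zer S y $ i \<noteq> 0" using y i unfolding C'_def by (auto simp: zer_def)
      have "wt (zer S y) \<le> wt y" unfolding wt_def
        by (rule card_mono) (auto simp: zer_def)
      hence le: "WW C' i \<le> WW C i" using WW_facts(1)[OF fy] y by simp
      have "WW C' i \<ge> 1" using WW_facts(2)[OF fy] wt_pos by metis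
      thus "1 / real (WW C i) \<le> 1 / real (WW C' i)" using le by (simp add: frac_le)
    qed
    have sub3: "UU C - S \<subseteq> UU C'"
    proof
      fix i assume i: "i \<in> UU C - S"
      then obtain x where x: "x \<in> C" "x $ i \<noteq> 0" unfolding UU_def by auto
      hence "zer S x \<in> C'" "zer S x $ i \<noteq> 0" using i unfolding C'_def by (auto simp: zer_def)
      thus "i \<in> UU C'" unfolding UU_def by blast
    qed
    have part3: "(\<Sum>i\<in>UU C - S. 1 / real (WW C' i)) \<le> (\<Sum>i\<in>UU C'. 1 / real (WW C' i))"
      by (rule sum_mono2) (use sub3 in auto)
    have "(\<Sum>i\<in>UU C. 1 / real (WW C i)) = (\<Sum>i\<in>S. 1 / real (WW C i)) + (\<Sum>i\<in>UU C - S. 1 / real (WW C i))"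
      using SU by (simp add: sum.subset_diff add.commute)
    also have "\<dots> \<le> 1 + real (vec.dim C')" using part1 part2 part3 IH by linarith
    also have "\<dots> \<le> real (vec.dim C)" using dimd by simp
    finally show ?thesis .
  qed
qed

theorem claim5p4:
  fixes C :: "(('a::{field,finite}) ^ 'n) set" and k :: nat
  assumes "vec.subspace C"
    and "vec.dim C = k"
  shows "(\<Sum>i\<in>{i. \<exists>c\<in>C. c $ i \<noteq> 0}.
            1 / real (Min {wt c | c. c \<in> C \<and> c $ i \<noteq> 0})) \<le> real k"
  using main[OF assms(1)] assms(2) unfolding UU_def WW_def by simp
end
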